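(* Let $G$ be a $2$-edge-connected graph, $C\in\mathrm{CP}(G)$, and $G'$ a connected component of $G-C$ that contains at least one edge. If $C'\in\mathrm{CP}(G')$ is not a coparallel class of $G$, then $C'=C_1\,\dot\cup\, C_2$ for two coparallel classes $C_1,C_2\in\mathrm{CP}(G)$.
   Context: All graphs are finite, simple and undirected. For $\emptyset\subsetneq S\subsetneq V(G)$, $\delta(S)$ is the set of edges with exactly one endpoint in $S$ (a cut). An edge $e$ is a bridge if $\{e\}=\delta(S)$ for some $S$. A graph is $2$-edge-connected if it is connected and has no bridges. Two distinct edges $e,f$ are coparallel if $\{e,f\}$ is an inclusion-wise minimal cut. A coparallel class is an inclusion-wise maximal set of non-bridge edges any two distinct elements of which are coparallel (a non-bridge edge in no $2$-cut forms a singleton class). $\mathrm{CP}(G)$ is the set of coparallel classes of $G$. $G-C$ denotes $G$ with the edges of $C$ deleted. *)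

theory Defs
  imports Main
begin

definition graph :: "'a set \<Rightarrow> 'a set set \<Rightarrow> bool" where
  "graph V E \<longleftrightarrow> finite V \<and> (\<forall>e\<in>E. \<exists>u v. u \<noteq> v \<and> u \<in> V \<and> v \<in> V \<and> e = {u, v})"

definition delta :: "'a set set \<Rightarrow> 'a set \<Rightarrow> 'a set set" where
  "delta E S = {e \<in> E. card (e \<inter> S) = 1}"

definition is_cut :: "'a set \<Rightarrow> 'a set set \<Rightarrow> 'a set set \<Rightarrow> bool" where
  "is_cut V E F \<longleftrightarrow> (\<exists>S. {} \<subset> S \<and> S \<subset> V \<and> F = delta E S)"

definition is_bridge :: "'a set \<Rightarrow> 'a set set \<Rightarrow> 'a set \<Rightarrow> bool" where
  "is_bridge V E e \<longleftrightarrow> e \<in> E \<and> is_cut V E {e}"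

definition reach :: "'a set set \<Rightarrow> 'a \<Rightarrow> 'a \<Rightarrow> bool" where
  "reach E = (\<lambda>x y. {x, y} \<in> E)\<^sup>*\<^sup>*"

definition connected_graph :: "'a set \<Rightarrow> 'a set set \<Rightarrow> bool" where
  "connected_graph V E \<longleftrightarrow> V \<noteq> {} \<and> (\<forall>u\<in>V. \<forall>v\<in>V. reach E u v)"

definition two_edge_connected :: "'a set \<Rightarrow> 'a set set \<Rightarrow> bool" where
  "two_edge_connected V E \<longleftrightarrow> connected_graph V E \<and> (\<forall>e\<in>E. \<not> is_bridge V E e)"

definition minimal_cut :: "'a set \<Rightarrow> 'a set set \<Rightarrow> 'a set set \<Rightarrow> bool" where
  "minimal_cut V E F \<longleftrightarrow> is_cut V E F \<and> (\<forall>F'. F' \<subset> F \<longrightarrow> \<not> is_cut V E F')"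

definition coparallel :: "'a set \<Rightarrow> 'a set set \<Rightarrow> 'a set \<Rightarrow> 'a set \<Rightarrow> bool" where
  "coparallel V E e f \<longleftrightarrow> e \<in> E \<and> f \<in> E \<and> e \<noteq> f \<and> minimal_cut V E {e, f}"

definition coparallel_set :: "'a set \<Rightarrow> 'a set set \<Rightarrow> 'a set set \<Rightarrow> bool" where
  "coparallel_set V E C \<longleftrightarrow> C \<subseteq> E \<and> (\<forall>e\<in>C. \<not> is_bridge V E e)
     \<and> (\<forall>e\<in>C. \<forall>f\<in>C. e \<noteq> f \<longrightarrow> coparallel V E e f)"

definition CP :: "'a set \<Rightarrow> 'a set set \<Rightarrow> 'a set set set" where
  "CP V E = {C. C \<noteq> {} \<and> coparallel_set V E C \<and>
                 (\<forall>D. coparallel_set V E D \<and> C \<subseteq> D \<longrightarrow> D = C)}"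

definition component :: "'a set \<Rightarrow> 'a set set \<Rightarrow> 'a set \<Rightarrow> bool" where
  "component V E K \<longleftrightarrow> (\<exists>v\<in>V. K = {u \<in> V. reach E v u})"

definition induced_edges :: "'a set set \<Rightarrow> 'a set \<Rightarrow> 'a set set" where
  "induced_edges E K = {e \<in> E. e \<subseteq> K}"

end

theory Submission
  imports Defs
begin

lemma graph_edge: "graph V E \<Longrightarrow> e \<in> E \<Longrightarrow> \<exists>u v. u \<noteq> v \<and> u \<in> V \<and> v \<in> V \<and> e = {u, v}"
  unfolding graph_def by blast

lemma graph_finE: "graph V E \<Longrightarrow> finite E"
proof -
  assume g: "graph V E"
  have "E \<subseteq> Pow V" using g unfolding graph_def by auto
  moreover have "finite V" using g unfolding graph_def by blast
  ultimately show ?thesis by (meson finite_Pow_iff rev_finite_subset)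
qed

lemma delta_mem: "u \<noteq> v \<Longrightarrow> {u,v} \<in> E \<Longrightarrow> ({u,v} \<in> delta E S \<longleftrightarrow> (u \<in> S \<longleftrightarrow> v \<notin> S))"
  unfolding delta_def by (cases "u \<in> S"; cases "v \<in> S") auto

lemma delta_sub: "delta E S \<subseteq> E" unfolding delta_def by auto

lemma delta_symdiff: assumes "graph V E"
  shows "delta E ((S - T) \<union> (T - S)) = (delta E S - delta E T) \<union> (delta E T - delta E S)"
proof (rule set_eqI)
  fix e
  show "e \<in> delta E ((S - T) \<union> (T - S)) \<longleftrightarrow> e \<in> (delta E S - delta E T) \<union> (delta E T - delta E S)"
  proof (cases "e \<in> E")
    case False then show ?thesis using delta_sub by blast
  next
    case True
    then obtain u v where uv: "u \<noteq> v" "e = {u,v}" using graph_edge[OF assms] by blast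
    show ?thesis using delta_mem[OF uv(1), of E] True uv(2) by auto
  qed
qed

lemma delta_V: assumes "graph V E" shows "delta E (S \<inter> V) = delta E S"
proof (rule set_eqI)
  fix e
  show "e \<in> delta E (S \<inter> V) \<longleftrightarrow> e \<in> delta E S"
  proof (cases "e \<in> E")
    case False then show ?thesis using delta_sub by blast
  next
    case True
    then obtain u v where uv: "u \<noteq> v" "u \<in> V" "v \<in> V" "e = {u,v}" using graph_edge[OF assms] by blast
    show ?thesis using delta_mem[OF uv(1), of E] True uv by auto
  qed
qed

lemma delta_empty: "delta E {} = {}" unfolding delta_def by auto

lemma delta_full: assumes "graph V E" shows "delta E V = {}"
proof (rule ccontr)
  assume "delta E V \<noteq> {}"
  then obtain e where e: "e \<in> delta E V" by blast
  then have eE: "e \<in> E" using delta_sub by blast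
  then obtain u v where uv: "u \<noteq> v" "u \<in> V" "v \<in> V" "e = {u,v}" using graph_edge[OF assms] by blast
  have "{u,v} \<in> delta E V" using e uv(4) by simp
  then have "(u \<in> V \<longleftrightarrow> v \<notin> V)" using delta_mem[OF uv(1), of E V] eE uv(4) by simp
  then show False using uv(2,3) by simp
qed

lemma cut_of_delta: assumes "graph V E" "delta E S \<noteq> {}" shows "is_cut V E (delta E S)"
proof -
  have d: "delta E (S \<inter> V) = delta E S" using delta_V[OF assms(1)] .
  have 1: "S \<inter> V \<noteq> {}"
  proof
    assume "S \<inter> V = {}"
    then have "delta E S = delta E {}" using d by simp
    then show False using assms(2) by (simp add: delta_empty)
  qed
  have 2: "S \<inter> V \<noteq> V"
  proof
    assume "S \<inter> V = V"
    then have "delta E S = delta E V" using d by simp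
    then show False using assms(2) delta_full[OF assms(1)] by simp
  qed
  have "{} \<subset> S \<inter> V" "S \<inter> V \<subset> V" using 1 2 by auto
  then show ?thesis unfolding is_cut_def using d by metis
qed

lemma conn_delta: assumes g: "graph V E" and c: "connected_graph V E" and k: "is_cut V E F"
  shows "F \<noteq> {}"
proof
  assume F0: "F = {}"
  obtain S where S: "{} \<subset> S" "S \<subset> V" "F = delta E S" using k unfolding is_cut_def by blast
  obtain u where u: "u \<in> S" using S by blast
  obtain w where w: "w \<in> V" "w \<notin> S" using S by blast
  have uV: "u \<in> V" using u S by blast
  have r: "reach E u w" using c uV w unfolding connected_graph_def by blast
  have "\<And>y. reach E u y \<Longrightarrow> y \<in> S"
  proof -
    fix y assume "reach E u y"
    then show "y \<in> S" unfolding reach_def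
    proof (induction rule: rtranclp_induct)
      case base then show ?case using u .
    next
      case (step x y)
      then have xy: "{x,y} \<in> E" by simp
      then obtain a b where ab: "a \<noteq> b" "{x,y} = {a,b}" using graph_edge[OF g] by blast
      then have "x \<noteq> y" by (metis doubleton_eq_iff)
      show ?case
      proof (rule ccontr)
        assume "y \<notin> S"
        then have "{x,y} \<in> delta E S" using delta_mem[OF \<open>x \<noteq> y\<close> xy] step by auto
        then show False using F0 S by auto
      qed
    qed
  qed
  then show False using r w by blast
qed

definition copar :: "'a set set \<Rightarrow> 'a set \<Rightarrow> 'a set \<Rightarrow> bool" where
  "copar E e f \<longleftrightarrow> e = f \<or> (\<exists>S. delta E S = {e, f})"

definition cls :: "'a set set \<Rightarrow> 'a set \<Rightarrow> 'a set set" where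
  "cls E e = {f \<in> E. copar E e f}"

lemma copar_refl: "copar E e e" unfolding copar_def by simp

lemma copar_sym: "copar E e f \<Longrightarrow> copar E f e"
  unfolding copar_def by (metis insert_commute)

lemma copar_trans: assumes g: "graph V E" and ef: "copar E e f" and fg: "copar E f g"
  shows "copar E e g"
proof (cases "e = f")
  case True then show ?thesis using fg by simp
next
  case ne1: False
  show ?thesis
  proof (cases "f = g")
    case True then show ?thesis using ef by simp
  next
    case ne2: False
    show ?thesis
    proof (cases "e = g")
      case True then show ?thesis by (simp add: copar_refl)
    next
      case ne3: False
      obtain S where S: "delta E S = {e,f}" using ef ne1 unfolding copar_def by blast
      obtain T where T: "delta E T = {f,g}" using fg ne2 unfolding copar_def by blast
      have "delta E ((S - T) \<union> (T - S)) = ({e,f} - {f,g}) \<union> ({f,g} - {e,f})"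
        unfolding delta_symdiff[OF g] S T by simp
      also have "\<dots> = {e,g}" using ne1 ne2 ne3 by auto
      finally show ?thesis unfolding copar_def by blast
    qed
  qed
qed

lemma copar_iff: assumes g: "graph V E" and t: "two_edge_connected V E"
  shows "coparallel V E e f \<longleftrightarrow> (e \<in> E \<and> f \<in> E \<and> e \<noteq> f \<and> copar E e f)"
proof
  assume a: "coparallel V E e f"
  then have 1: "e \<in> E" "f \<in> E" "e \<noteq> f" and mc: "minimal_cut V E {e,f}"
    unfolding coparallel_def by auto
  from mc have "is_cut V E {e,f}" unfolding minimal_cut_def by simp
  then obtain S where "{e,f} = delta E S" unfolding is_cut_def by blast
  then have "copar E e f" unfolding copar_def by metis
  then show "e \<in> E \<and> f \<in> E \<and> e \<noteq> f \<and> copar E e f" using 1 by simp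
next
  assume a: "e \<in> E \<and> f \<in> E \<and> e \<noteq> f \<and> copar E e f"
  then obtain S where S: "delta E S = {e,f}" unfolding copar_def by blast
  have cut: "is_cut V E {e,f}" using cut_of_delta[OF g, of S] S by auto
  have conn: "connected_graph V E" and nb: "\<forall>x\<in>E. \<not> is_bridge V E x"
    using t unfolding two_edge_connected_def by auto
  have "\<forall>F'. F' \<subset> {e,f} \<longrightarrow> \<not> is_cut V E F'"
  proof (intro allI impI notI)
    fix F' assume sub: "F' \<subset> {e,f}" and c: "is_cut V E F'"
    have "F' \<noteq> {}" using conn_delta[OF g conn c] .
    then have "F' = {e} \<or> F' = {f}" using sub by blast
    then show False
    proof
      assume "F' = {e}" then have "is_bridge V E e" using c a unfolding is_bridge_def by simp
      then show False using nb a by blast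
    next
      assume "F' = {f}" then have "is_bridge V E f" using c a unfolding is_bridge_def by simp
      then show False using nb a by blast
    qed
  qed
  then show "coparallel V E e f" unfolding coparallel_def minimal_cut_def using a cut by blast
qed

lemma cls_cps: assumes g: "graph V E" and t: "two_edge_connected V E"
  shows "coparallel_set V E (cls E e)"
  unfolding coparallel_set_def
proof (intro conjI ballI impI)
  show "cls E e \<subseteq> E" unfolding cls_def by blast
next
  fix x assume "x \<in> cls E e"
  then show "\<not> is_bridge V E x" using t unfolding cls_def two_edge_connected_def by blast
next
  fix x y assume x: "x \<in> cls E e" and y: "y \<in> cls E e" and "x \<noteq> y"
  have "copar E x y" using x y copar_trans[OF g] copar_sym unfolding cls_def by blast
  then show "coparallel V E x y" using copar_iff[OF g t] x y \<open>x \<noteq> y\<close> unfolding cls_def by blast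
qed

lemma CP_cls: assumes g: "graph V E" and t: "two_edge_connected V E"
  and C: "C \<in> CP V E" and e: "e \<in> C"
  shows "C = cls E e"
proof -
  have cs: "coparallel_set V E C" and mx: "\<And>D. coparallel_set V E D \<and> C \<subseteq> D \<longrightarrow> D = C"
    using C unfolding CP_def by blast+
  have sub: "C \<subseteq> cls E e"
  proof
    fix f assume f: "f \<in> C"
    have fE: "f \<in> E" using cs f unfolding coparallel_set_def by blast
    show "f \<in> cls E e"
    proof (cases "f = e")
      case True then show ?thesis using fE copar_refl unfolding cls_def by blast
    next
      case False
      then have "coparallel V E e f" using cs e f unfolding coparallel_set_def by blast
      then show ?thesis using copar_iff[OF g t] unfolding cls_def by blast
    qed
  qed
  then show ?thesis using mx cls_cps[OF g t] by blast
qed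

lemma cls_CP: assumes g: "graph V E" and t: "two_edge_connected V E" and e: "e \<in> E"
  shows "cls E e \<in> CP V E"
proof -
  have ne: "cls E e \<noteq> {}" using e copar_refl unfolding cls_def by blast
  have "\<And>D. coparallel_set V E D \<and> cls E e \<subseteq> D \<longrightarrow> D = cls E e"
  proof (intro impI)
    fix D assume D: "coparallel_set V E D \<and> cls E e \<subseteq> D"
    have eD: "e \<in> D" using D e copar_refl unfolding cls_def by blast
    have "D \<subseteq> cls E e"
    proof
      fix d assume d: "d \<in> D"
      have dE: "d \<in> E" using D d unfolding coparallel_set_def by blast
      show "d \<in> cls E e"
      proof (cases "d = e")
        case True then show ?thesis using dE copar_refl unfolding cls_def by blast
      next
        case False
        then have "coparallel V E e d" using D eD d unfolding coparallel_set_def by blast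
        then show ?thesis using copar_iff[OF g t] unfolding cls_def by blast
      qed
    qed
    then show "D = cls E e" using D by blast
  qed
  then show ?thesis unfolding CP_def using ne cls_cps[OF g t] by blast
qed

lemma toggle: assumes g: "graph V E" and pw: "\<forall>x\<in>C. \<forall>y\<in>C. copar E x y" and c0: "c0 \<in> C"
  and fin: "finite X"
  shows "X \<subseteq> C \<Longrightarrow> \<exists>T. (delta E T - X) \<union> (X - delta E T) \<subseteq> {c0}"
  using fin
proof (induction X rule: finite_induct)
  case empty then show ?case using delta_empty by blast
next
  case (insert x X)
  then obtain T where T: "(delta E T - X) \<union> (X - delta E T) \<subseteq> {c0}" by blast
  show ?case
  proof (cases "x = c0")
    case True
    then show ?thesis using T insert(2) by blast
  next
    case False
    have "copar E x c0" using pw insert(4) c0 by blast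
    then obtain Tx where Tx: "delta E Tx = {x, c0}" using False unfolding copar_def by blast
    have "delta E ((T - Tx) \<union> (Tx - T)) = (delta E T - {x,c0}) \<union> ({x,c0} - delta E T)"
      using delta_symdiff[OF g] Tx by simp
    then have "(delta E ((T - Tx) \<union> (Tx - T)) - insert x X) \<union> (insert x X - delta E ((T - Tx) \<union> (Tx - T))) \<subseteq> {c0}"
      using T insert(2) False by blast
    then show ?thesis by blast
  qed
qed

lemma reach_sym: "reach E a b \<Longrightarrow> reach E b a"
  unfolding reach_def
proof (induction rule: rtranclp_induct)
  case base then show ?case by simp
next
  case (step x y)
  have "{y,x} \<in> E" using step(2) by (simp add: insert_commute)
  then show ?case using step(3) by (simp add: converse_rtranclp_into_rtranclp)
qed

lemma reach_trans: "reach E a b \<Longrightarrow> reach E b c \<Longrightarrow> reach E a c"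
  unfolding reach_def by (rule rtranclp_trans)


theorem mainTheorem4:
  fixes V :: "'a set" and E :: "'a set set"
    and C C' :: "'a set set" and K :: "'a set"
  assumes "graph V E"
    and "two_edge_connected V E"
    and "C \<in> CP V E"
    and "component V (E - C) K"
    and "induced_edges (E - C) K \<noteq> {}"
    and "C' \<in> CP K (induced_edges (E - C) K)"
    and "C' \<notin> CP V E"
  shows "\<exists>C1 C2. C1 \<in> CP V E \<and> C2 \<in> CP V E \<and> C1 \<inter> C2 = {} \<and> C' = C1 \<union> C2"
proof -
  note g = assms(1) and t = assms(2) and CC = assms(3)
  define E' where "E' = induced_edges (E - C) K"
  have E'def: "E' = {e \<in> E - C. e \<subseteq> K}" unfolding E'_def induced_edges_def by simp
  obtain v where v: "v \<in> V" and Kdef: "K = {u \<in> V. reach (E - C) v u}"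
    using assms(4) unfolding component_def by blast
  have KV: "K \<subseteq> V" using Kdef by blast
  have vK: "v \<in> K" using v Kdef unfolding reach_def by simp
  have CE: "C \<subseteq> E" using CC unfolding CP_def coparallel_set_def by blast
  obtain c0 where c0: "c0 \<in> C" using CC unfolding CP_def by blast
  have Ccls: "C = cls E c0" using CP_cls[OF g t CC c0] .
  have pw: "\<forall>x\<in>C. \<forall>y\<in>C. copar E x y"
  proof (intro ballI)
    fix x y assume "x \<in> C" "y \<in> C"
    then have "copar E c0 x" "copar E c0 y" using Ccls unfolding cls_def by auto
    then show "copar E x y" using copar_trans[OF g] copar_sym by metis
  qed
  have clos: "\<And>x y. x \<in> K \<Longrightarrow> {x,y} \<in> E - C \<Longrightarrow> y \<in> K"
  proof -
    fix x y assume x: "x \<in> K" and xy: "{x,y} \<in> E - C"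
    have r: "reach (E - C) v x" using x Kdef by blast
    have "reach (E - C) v y" using r xy unfolding reach_def by (simp add: rtranclp.rtrancl_into_rtrancl)
    moreover obtain a b where "a \<in> V" "b \<in> V" "{x,y} = {a,b}" using graph_edge[OF g, of "{x,y}"] xy by blast
    then have "y \<in> V" by (metis doubleton_eq_iff)
    ultimately show "y \<in> K" using Kdef by blast
  qed
  have gK: "graph K E'"
    unfolding graph_def
  proof (intro conjI ballI)
    show "finite K" using g KV unfolding graph_def by (meson rev_finite_subset)
  next
    fix e assume e: "e \<in> E'"
    then have eE: "e \<in> E" and eK: "e \<subseteq> K" using E'def by auto
    obtain a b where "a \<noteq> b" "e = {a,b}" using graph_edge[OF g eE] by blast
    then show "\<exists>u v. u \<noteq> v \<and> u \<in> K \<and> v \<in> K \<and> e = {u, v}" using eK by blast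
  qed
  have reachK: "\<And>u. reach (E - C) v u \<Longrightarrow> reach E' v u"
  proof -
    fix u assume "reach (E - C) v u"
    then show "reach E' v u" unfolding reach_def
    proof (induction rule: rtranclp_induct)
      case base then show ?case by simp
    next
      case (step x y)
      have xy: "{x,y} \<in> E - C" using step(2) by simp
      obtain a b where "a \<in> V" "b \<in> V" "{x,y} = {a,b}" using graph_edge[OF g, of "{x,y}"] xy by blast
      then have "x \<in> V" by (metis doubleton_eq_iff)
      then have xK: "x \<in> K" using Kdef step(1) unfolding reach_def by blast
      have yK: "y \<in> K" using clos[OF xK xy] .
      have "{x,y} \<in> E'" using E'def xy xK yK by auto
      then show ?case using step(3) by (simp add: rtranclp.rtrancl_into_rtrancl)
    qed
  qed
  have connK: "connected_graph K E'"
    unfolding connected_graph_def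
  proof (intro conjI ballI)
    show "K \<noteq> {}" using vK by blast
  next
    fix a b assume a: "a \<in> K" and b: "b \<in> K"
    have "reach E' v a" "reach E' v b" using a b Kdef reachK by auto
    then show "reach E' a b" using reach_sym reach_trans by metis
  qed
  have dE': "\<And>S. delta E' S = delta E S \<inter> E'" unfolding delta_def E'def by auto
  have dK: "\<And>S. delta E' (S \<inter> K) = delta E' S" using delta_V[OF gK] .
  have decomp: "\<And>S. S \<subseteq> K \<Longrightarrow> delta E S - C = delta E' S"
  proof
    fix S assume SK: "S \<subseteq> K"
    show "delta E S - C \<subseteq> delta E' S"
    proof
      fix e assume e: "e \<in> delta E S - C"
      then have eE: "e \<in> E" using delta_sub by blast
      obtain a b where ab: "a \<noteq> b" "e = {a,b}" using graph_edge[OF g eE] by blast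
      have em: "a \<in> S \<longleftrightarrow> b \<notin> S" using delta_mem[OF ab(1), of E S] eE ab(2) e by auto
      have eC: "{a,b} \<in> E - C" using e eE ab(2) by auto
      have "a \<in> K \<and> b \<in> K"
      proof (cases "a \<in> S")
        case True then have "a \<in> K" using SK by blast
        then show ?thesis using clos[OF _ eC] by blast
      next
        case False then have "b \<in> S" using em by blast
        then have bK: "b \<in> K" using SK by blast
        have "{b,a} \<in> E - C" using eC by (simp add: insert_commute)
        then show ?thesis using clos[OF bK] bK by blast
      qed
      then have "e \<in> E'" using E'def eC ab(2) by auto
      then show "e \<in> delta E' S" using dE' e by blast
    qed
  next
    fix S assume "S \<subseteq> K"
    show "delta E' S \<subseteq> delta E S - C" using dE' E'def by blast
  qed
  have c0E': "c0 \<notin> E'" using c0 E'def by blast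
  have KL: "\<And>S. \<exists>S'. delta E S' = delta E' S \<or> delta E S' = insert c0 (delta E' S)"
  proof -
    fix S0
    define S where "S = S0 \<inter> K"
    have SK: "S \<subseteq> K" unfolding S_def by blast
    have dS: "delta E' S = delta E' S0" unfolding S_def using dK .
    define X where "X = delta E S \<inter> C"
    have finX: "finite X" using graph_finE[OF g] delta_sub unfolding X_def by (meson finite_Int rev_finite_subset)
    obtain T where T: "(delta E T - X) \<union> (X - delta E T) \<subseteq> {c0}"
      using toggle[OF g pw c0 finX] X_def by blast
    define A where "A = delta E' S"
    have AC: "A \<inter> C = {}" unfolding A_def using dE' E'def by blast
    have dSs: "delta E S = A \<union> X" using decomp[OF SK] unfolding A_def X_def by blast
    have TC: "delta E T \<subseteq> C" using T X_def c0 by blast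
    have "delta E ((S - T) \<union> (T - S)) = ((A \<union> X) - delta E T) \<union> (delta E T - (A \<union> X))"
      using delta_symdiff[OF g] dSs by simp
    also have "\<dots> = A \<union> ((X - delta E T) \<union> (delta E T - X))" using AC TC X_def by blast
    finally have eq: "delta E ((S - T) \<union> (T - S)) = A \<union> ((X - delta E T) \<union> (delta E T - X))" .
    have "(X - delta E T) \<union> (delta E T - X) = {} \<or> (X - delta E T) \<union> (delta E T - X) = {c0}"
      using T by blast
    then show "\<exists>S'. delta E S' = delta E' S0 \<or> delta E S' = insert c0 (delta E' S0)"
    proof
      assume z: "(X - delta E T) \<union> (delta E T - X) = {}"
      have "delta E ((S - T) \<union> (T - S)) = delta E' S0" using eq unfolding z dS A_def by simp
      then show ?thesis by blast
    next
      assume z: "(X - delta E T) \<union> (delta E T - X) = {c0}"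
      have "delta E ((S - T) \<union> (T - S)) = insert c0 (delta E' S0)" using eq unfolding z dS A_def by simp
      then show ?thesis by blast
    qed
  qed
  have nbK: "\<forall>e\<in>E'. \<not> is_bridge K E' e"
  proof (intro ballI notI)
    fix e assume e: "e \<in> E'" and br: "is_bridge K E' e"
    then obtain S where S: "{e} = delta E' S" unfolding is_bridge_def is_cut_def by blast
    obtain S' where S': "delta E S' = delta E' S \<or> delta E S' = insert c0 (delta E' S)" using KL by blast
    have eE: "e \<in> E" "e \<notin> C" using e E'def by auto
    show False
    proof (cases "delta E S' = delta E' S")
      case True
      then have "delta E S' = {e}" using S by simp
      then have "is_cut V E {e}" using cut_of_delta[OF g, of S'] by simp
      then show False using t eE unfolding two_edge_connected_def is_bridge_def by blast
    next
      case False
      then have "delta E S' = {c0, e}" using S' S by simp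
      then have "copar E c0 e" unfolding copar_def by blast
      then have "e \<in> cls E c0" using eE unfolding cls_def by blast
      then show False using Ccls eE by blast
    qed
  qed
  have tK: "two_edge_connected K E'" unfolding two_edge_connected_def using connK nbK by blast
  have C'CP: "C' \<in> CP K E'" using assms(6) unfolding E'_def .
  have C'E': "C' \<subseteq> E'" using C'CP unfolding CP_def coparallel_set_def by blast
  obtain e where e: "e \<in> C'" using C'CP unfolding CP_def by blast
  have C'cls: "\<And>x. x \<in> C' \<Longrightarrow> C' = cls E' x" using CP_cls[OF gK tK C'CP] by blast
  have E'E: "E' \<subseteq> E - C" using E'def by blast
  have sub: "\<And>x. x \<in> C' \<Longrightarrow> cls E x \<subseteq> C'"
  proof
    fix x f assume x: "x \<in> C'" and f: "f \<in> cls E x"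
    have xE': "x \<in> E'" using x C'E' by blast
    have fE: "f \<in> E" and cxf: "copar E x f" using f unfolding cls_def by auto
    show "f \<in> C'"
    proof (cases "f = x")
      case True then show ?thesis using x by simp
    next
      case False
      then obtain T where T: "delta E T = {x,f}" using cxf unfolding copar_def by metis
      have fC: "f \<notin> C"
      proof
        assume "f \<in> C"
        then have "copar E c0 f" using Ccls unfolding cls_def by blast
        then have "copar E c0 x" using copar_trans[OF g] copar_sym cxf by metis
        then have "x \<in> C" using Ccls xE' E'E unfolding cls_def by blast
        then show False using xE' E'E by blast
      qed
      have fE': "f \<in> E'"
      proof (rule ccontr)
        assume "f \<notin> E'"
        then have "delta E' T = {x}" using dE' T xE' by auto
        then have "is_cut K E' {x}" using cut_of_delta[OF gK, of T] by simp
        then show False using nbK xE' unfolding is_bridge_def by blast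
      qed
      have "delta E' T = {x,f}" using dE' T xE' fE' by auto
      then have "copar E' x f" unfolding copar_def by blast
      then have "f \<in> cls E' x" using fE' unfolding cls_def by blast
      then show ?thesis using C'cls[OF x] by blast
    qed
  qed
  have eE: "e \<in> E" using e C'E' E'E by blast
  define C1 where "C1 = cls E e"
  have C1CP: "C1 \<in> CP V E" unfolding C1_def using cls_CP[OF g t eE] .
  have C1sub: "C1 \<subseteq> C'" unfolding C1_def using sub[OF e] .
  have "C1 \<noteq> C'" using C1CP assms(7) by blast
  then obtain g' where g': "g' \<in> C'" "g' \<notin> C1" using C1sub by blast
  have gE: "g' \<in> E" using g' C'E' E'E by blast
  define C2 where "C2 = cls E g'"
  have C2CP: "C2 \<in> CP V E" unfolding C2_def using cls_CP[OF g t gE] .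
  have C2sub: "C2 \<subseteq> C'" unfolding C2_def using sub[OF g'(1)] .
  have neg: "\<not> copar E e g'" using g' gE unfolding C1_def cls_def by blast
  have disj: "C1 \<inter> C2 = {}"
  proof (rule ccontr)
    assume "C1 \<inter> C2 \<noteq> {}"
    then obtain h where "copar E e h" "copar E g' h" unfolding C1_def C2_def cls_def by blast
    then have "copar E e g'" using copar_trans[OF g] copar_sym by metis
    then show False using neg by blast
  qed
  have keyS: "\<And>h. h \<in> C' \<Longrightarrow> \<not> copar E e h \<Longrightarrow> \<exists>S. delta E S = {c0, e, h}"
  proof -
    fix h assume h: "h \<in> C'" and nh: "\<not> copar E e h"
    have "copar E' e h" using C'cls[OF e] h unfolding cls_def by blast
    moreover have "e \<noteq> h" using nh copar_refl by metis
    ultimately obtain S where S: "delta E' S = {e,h}" unfolding copar_def by blast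
    obtain S' where S': "delta E S' = delta E' S \<or> delta E S' = insert c0 (delta E' S)" using KL by blast
    have "delta E S' \<noteq> {e,h}" using nh unfolding copar_def by blast
    then have "delta E S' = {c0,e,h}" using S' S by auto
    then show "\<exists>S. delta E S = {c0, e, h}" by blast
  qed
  have cov: "C' \<subseteq> C1 \<union> C2"
  proof
    fix h assume h: "h \<in> C'"
    show "h \<in> C1 \<union> C2"
    proof (rule ccontr)
      assume "h \<notin> C1 \<union> C2"
      then have h1: "h \<notin> C1" and h2: "h \<notin> C2" by auto
      have hE: "h \<in> E" using h C'E' E'E by blast
      have nh: "\<not> copar E e h" using h1 hE unfolding C1_def cls_def by blast
      have ngh: "\<not> copar E g' h" using h2 hE unfolding C2_def cls_def by blast
      obtain S1 where S1: "delta E S1 = {c0, e, g'}" using keyS[OF g'(1) neg] by blast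
      obtain S2 where S2: "delta E S2 = {c0, e, h}" using keyS[OF h nh] by blast
      have gh: "g' \<noteq> h" using ngh copar_refl by metis
      have "c0 \<noteq> g'" "c0 \<noteq> h" "c0 \<noteq> e" using c0E' g'(1) h e C'E' by auto
      moreover have "e \<noteq> g'" "e \<noteq> h" using neg nh copar_refl by metis+
      ultimately have "({c0, e, g'} - {c0, e, h}) \<union> ({c0, e, h} - {c0, e, g'}) = {g', h}"
        using gh by auto
      then have "delta E ((S1 - S2) \<union> (S2 - S1)) = {g', h}" using delta_symdiff[OF g] S1 S2 by simp
      then have "copar E g' h" unfolding copar_def by blast
      then show False using ngh by blast
    qed
  qed
  have "C' = C1 \<union> C2" using cov C1sub C2sub by blast
  then show ?thesis using C1CP C2CP disj by blast
qed

end
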